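(* Consider the setting and hypotheses of the data-driven invariance theorem: the unknown system $\dot x=A_\star Z(x)+B_\star W(x)u$, data $\dot x^j=A_\star z^j+B_\star v^j+d^j$ with $|d^j|^2\le\omega$ ($j=0,\dots,T-1$), $\epsilon>0$, and a symmetric $A_{\mathrm{i}}\in\mathbb{R}^{p\times p}$, $B_{\mathrm{i}}\in\mathbb{R}^{p\times n}$, $\tau_0,\dots,\tau_{T-1}$ satisfying $$\begin{bmatrix}-I-\sum_{j}\tau_jc_j & B_{\mathrm{i}}^\top-\sum_{j}\tau_jb_j^\top & B_{\mathrm{i}}^\top\\ B_{\mathrm{i}}-\sum_{j}\tau_jb_j & A_{\mathrm{i}}-\sum_{j}\tau_ja_j & 0\\ B_{\mathrm{i}} & 0 & -A_{\mathrm{i}}\end{bmatrix}\preceq 0,\quad A_{\mathrm{i}}\succ 0,\quad \tau_j\ge0,$$ with $\bar\zeta:=-A_{\mathrm{i}}^{-1}B_{\mathrm{i}}$, $\bar P:=A_{\mathrm{i}}^{-1/2}$, $\bar Q:=I_n$. Let $\sigma_1,\dots,\sigma_q:\mathbb{R}^n\to\mathbb{R}$ be polynomials, $\lambda:\mathbb{R}^n\to\mathbb{R}$ a polynomial with $\lambda(x)\ge0$ for all $x$, and $\bar\eta>0$. Define $\mathcal{S}:=\{x:\sigma_j(x)\le0,\ j=1,\dots,q\}$ and, for $\theta\ge0$, $\mathcal{L}_\theta:=\{x:\lambda(x)\le\theta\}$. Suppose there exist polynomials $\ell,\eta,h:\mathbb{R}^n\to\mathbb{R}$, a polynomial $K:\mathbb{R}^n\to\mathbb{R}^m$,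 SOS polynomials $s_1,\dots,s_q,\varsigma\in\Sigma$ and $\theta\ge0$ such that $$\eta-\bar\eta\in\Sigma,\quad -H\in\Sigma_{1+p+n},\quad \varsigma(\lambda-\theta)-h\in\Sigma,\quad s_jh-\sigma_j\in\Sigma\ (j=1,\dots,q),$$ where $$H(x):=\begin{bmatrix}\ell(x)h(x)+\epsilon+\frac{\partial h}{\partial x}(x)\,\bar\zeta^\top\begin{bmatrix}Z(x)\\ W(x)K(x)\end{bmatrix} & \star & \star\\ \eta(x)\bar P\begin{bmatrix}Z(x)\\ W(x)K(x)\end{bmatrix} & -2\eta(x)I_p & \star\\ \bar Q^{1/2}\frac{\partial h}{\partial x}(x)^\top & 0 & -2\eta(x)I_n\end{bmatrix}.$$ Then $\mathcal{I}:=\{x\in\mathbb{R}^n:h(x)\le0\}$ is invariant for the closed-loop system $\dot x=A_\star Z(x)+B_\star W(x)K(x)$ and $\mathcal{L}_\theta\subseteq\mathcal{I}\subseteq\mathcal{S}$. (In particular this holds for any solution of the program maximizing $\theta$ subject to these constraints.)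
   Context: $A_\star\in\mathbb{R}^{n\times N_A}$, $B_\star\in\mathbb{R}^{n\times N_B}$ are unknown constant matrices; $Z:\mathbb{R}^n\to\mathbb{R}^{N_A}$ is a known vector of monomials and $W:\mathbb{R}^n\to\mathbb{R}^{N_B\times m}$ a known matrix of monomials; $p:=N_A+N_B$; $z^j=Z(x^j)$, $v^j=W(x^j)u^j$ for sampled states/inputs and $\dot x^j$ the sampled derivatives; $c_j:=-\omega I_n+\dot x^j(\dot x^j)^\top$, $b_j:=-\begin{bmatrix}z^j\\ v^j\end{bmatrix}(\dot x^j)^\top$, $a_j:=\begin{bmatrix}z^j\\ v^j\end{bmatrix}\begin{bmatrix}z^j\\ v^j\end{bmatrix}^\top$; sums run over $j=0,\dots,T-1$. $\Sigma$ is the set of SOS polynomials: polynomials $h$ with $h=\sum_{i=1}^k h_i^2$ for some polynomials $h_i$. $\Sigma_r$ is the set of SOS matrix polynomials: $r\times r$ matrix polynomials $H$ with $H(x)=\sum_{i=1}^kH_i(x)^\top H_i(x)$ for some $r\times r$ matrix polynomials $H_i$. $\star$ denotes blocks determined by symmetry; $\frac{\partial h}{\partial x}(x)$ is the gradient as a row vector. A set $\mathcal{I}$ is invariant for $\dot x=a(x)$ ($a$ polynomial) if every maximal solution starting in $\mathcal{I}$ remains in $\mathcal{I}$ on its whole interval of existence. *)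

theory Defs
  imports "HOL-Analysis.Analysis"
begin

inductive poly_fun :: "(real ^ 'n \<Rightarrow> real) \<Rightarrow> bool" where
  poly_const: "poly_fun (\<lambda>x. c)"
| poly_coord: "poly_fun (\<lambda>x. x $ i)"
| poly_add: "poly_fun f \<Longrightarrow> poly_fun g \<Longrightarrow> poly_fun (\<lambda>x. f x + g x)"
| poly_mult: "poly_fun f \<Longrightarrow> poly_fun g \<Longrightarrow> poly_fun (\<lambda>x. f x * g x)"

definition poly_vec :: "(real ^ 'n \<Rightarrow> real ^ 'k) \<Rightarrow> bool" where
  "poly_vec F \<longleftrightarrow> (\<forall>i. poly_fun (\<lambda>x. F x $ i))"

definition poly_mat :: "(real ^ 'n \<Rightarrow> real ^ 'c ^ 'r) \<Rightarrow> bool" where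
  "poly_mat F \<longleftrightarrow> (\<forall>i j. poly_fun (\<lambda>x. F x $ i $ j))"

definition monomial_fun :: "(real ^ 'n \<Rightarrow> real) \<Rightarrow> bool" where
  "monomial_fun f \<longleftrightarrow> (\<exists>k :: 'n \<Rightarrow> nat. f = (\<lambda>x. \<Prod>i\<in>UNIV. (x $ i) ^ k i))"

definition sos :: "(real ^ 'n \<Rightarrow> real) \<Rightarrow> bool" where
  "sos f \<longleftrightarrow> (\<exists>hs. (\<forall>h\<in>set hs. poly_fun h) \<and> f = (\<lambda>x. \<Sum>h\<leftarrow>hs. (h x)^2))"

definition sos_mat :: "(real ^ 'n \<Rightarrow> real ^ 'r ^ 'r) \<Rightarrow> bool" where
  "sos_mat H \<longleftrightarrow> (\<exists>Hs :: (real ^ 'n \<Rightarrow> real ^ 'r ^ 'r) list.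
      (\<forall>Hi\<in>set Hs. poly_mat Hi) \<and> H = (\<lambda>x. \<Sum>Hi\<leftarrow>Hs. transpose (Hi x) ** Hi x))"

definition symmetric_mat :: "real ^ 'n ^ 'n \<Rightarrow> bool" where
  "symmetric_mat M \<longleftrightarrow> transpose M = M"

definition pos_def :: "real ^ 'n ^ 'n \<Rightarrow> bool" where
  "pos_def M \<longleftrightarrow> symmetric_mat M \<and> (\<forall>v. v \<noteq> 0 \<longrightarrow> v \<bullet> (M *v v) > 0)"

definition pos_semidef :: "real ^ 'n ^ 'n \<Rightarrow> bool" where
  "pos_semidef M \<longleftrightarrow> symmetric_mat M \<and> (\<forall>v. v \<bullet> (M *v v) \<ge> 0)"

definition neg_semidef :: "real ^ 'n ^ 'n \<Rightarrow> bool" where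
  "neg_semidef M \<longleftrightarrow> symmetric_mat M \<and> (\<forall>v. v \<bullet> (M *v v) \<le> 0)"

definition psd_sqrt :: "real ^ 'n ^ 'n \<Rightarrow> real ^ 'n ^ 'n" where
  "psd_sqrt M = (THE S. pos_semidef S \<and> S ** S = M)"

definition blk3 ::
  "real ^ 'c1 ^ 'r1 \<Rightarrow> real ^ 'c2 ^ 'r1 \<Rightarrow> real ^ 'c3 ^ 'r1 \<Rightarrow>
   real ^ 'c1 ^ 'r2 \<Rightarrow> real ^ 'c2 ^ 'r2 \<Rightarrow> real ^ 'c3 ^ 'r2 \<Rightarrow>
   real ^ 'c1 ^ 'r3 \<Rightarrow> real ^ 'c2 ^ 'r3 \<Rightarrow> real ^ 'c3 ^ 'r3 \<Rightarrow>
   real ^ ('c1 + 'c2 + 'c3) ^ ('r1 + 'r2 + 'r3)" where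
  "blk3 M11 M12 M13 M21 M22 M23 M31 M32 M33 = (\<chi> i j.
     (case i of
        Inl i1 \<Rightarrow> (case j of Inl j1 \<Rightarrow> M11 $ i1 $ j1 | Inr (Inl j2) \<Rightarrow> M12 $ i1 $ j2
                            | Inr (Inr j3) \<Rightarrow> M13 $ i1 $ j3)
      | Inr (Inl i2) \<Rightarrow> (case j of Inl j1 \<Rightarrow> M21 $ i2 $ j1 | Inr (Inl j2) \<Rightarrow> M22 $ i2 $ j2
                            | Inr (Inr j3) \<Rightarrow> M23 $ i2 $ j3)
      | Inr (Inr i3) \<Rightarrow> (case j of Inl j1 \<Rightarrow> M31 $ i3 $ j1 | Inr (Inl j2) \<Rightarrow> M32 $ i3 $ j2
                            | Inr (Inr j3) \<Rightarrow> M33 $ i3 $ j3)))"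

definition col_mat :: "real ^ 'k \<Rightarrow> real ^ unit ^ 'k" where
  "col_mat v = (\<chi> i j. v $ i)"

definition scal_mat :: "real \<Rightarrow> real ^ unit ^ unit" where
  "scal_mat a = (\<chi> i j. a)"

definition outer :: "real ^ 'r \<Rightarrow> real ^ 'c \<Rightarrow> real ^ 'c ^ 'r" where
  "outer u v = (\<chi> i j. u $ i * v $ j)"

definition stack :: "real ^ 'a \<Rightarrow> real ^ 'b \<Rightarrow> real ^ ('a + 'b)" where
  "stack u v = (\<chi> k. case k of Inl i \<Rightarrow> u $ i | Inr j \<Rightarrow> v $ j)"

text \<open>Gradient of h at x (the row vector dh/dx(x), stored as a vector).\<close>
definition grad :: "(real ^ 'n \<Rightarrow> real) \<Rightarrow> real ^ 'n \<Rightarrow> real ^ 'n" where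
  "grad h x = (\<chi> i. frechet_derivative h (at x) (axis i 1))"

definition forward_interval :: "real set \<Rightarrow> bool" where
  "forward_interval J \<longleftrightarrow> (\<exists>b>0. J = {0..<b}) \<or> J = {0..}"

definition is_solution ::
  "(real ^ 'n \<Rightarrow> real ^ 'n) \<Rightarrow> (real \<Rightarrow> real ^ 'n) \<Rightarrow> real set \<Rightarrow> bool" where
  "is_solution f x J \<longleftrightarrow> (\<forall>t\<in>J. (x has_vector_derivative f (x t)) (at t within J))"

definition maximal_solution ::
  "(real ^ 'n \<Rightarrow> real ^ 'n) \<Rightarrow> (real \<Rightarrow> real ^ 'n) \<Rightarrow> real set \<Rightarrow> bool" where
  "maximal_solution f x J \<longleftrightarrow> forward_interval J \<and> is_solution f x J \<and>
     \<not> (\<exists>J' y. forward_interval J' \<and> J \<subset> J' \<and> is_solution f y J' \<and> (\<forall>t\<in>J. y t = x t))"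

definition invariant_set :: "(real ^ 'n \<Rightarrow> real ^ 'n) \<Rightarrow> (real ^ 'n) set \<Rightarrow> bool" where
  "invariant_set f I \<longleftrightarrow>
     (\<forall>x J. maximal_solution f x J \<and> x 0 \<in> I \<longrightarrow> (\<forall>t\<in>J. x t \<in> I))"

end

theory Submission
  imports Defs
begin

lemma sum_UNIV_plus:
  "(\<Sum>i\<in>(UNIV::('a::finite+'b::finite) set). f i) = (\<Sum>i\<in>UNIV. f (Inl i)) + (\<Sum>j\<in>UNIV. f (Inr j))"
proof -
  have "(\<Sum>i\<in>(UNIV::('a+'b) set). f i) = sum f (Inl ` UNIV \<union> Inr ` UNIV)"
    by (simp only: UNIV_sum[symmetric])
  also have "\<dots> = sum f (Inl ` UNIV) + sum f (Inr ` UNIV)"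
    by (rule sum.union_disjoint) auto
  also have "\<dots> = (\<Sum>i\<in>UNIV. f (Inl i)) + (\<Sum>j\<in>UNIV. f (Inr j))"
    by (simp add: sum.reindex)
  finally show ?thesis .
qed

lemma inner_stack: "stack u v \<bullet> stack u' v' = u \<bullet> u' + v \<bullet> v'"
  by (simp add: inner_vec_def stack_def sum_UNIV_plus)

lemma blk3_mv:
  "blk3 M11 M12 M13 M21 M22 M23 M31 M32 M33 *v stack v1 (stack v2 v3)
   = stack (M11 *v v1 + M12 *v v2 + M13 *v v3)
       (stack (M21 *v v1 + M22 *v v2 + M23 *v v3) (M31 *v v1 + M32 *v v2 + M33 *v v3))"
  unfolding blk3_def stack_def matrix_vector_mult_def
  by (auto simp: vec_eq_iff sum_UNIV_plus split: sum.splits)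

lemma qf3:
  "stack v1 (stack v2 v3) \<bullet> (blk3 M11 M12 M13 M21 M22 M23 M31 M32 M33 *v stack v1 (stack v2 v3))
   = v1 \<bullet> (M11 *v v1) + v1 \<bullet> (M12 *v v2) + v1 \<bullet> (M13 *v v3)
   + v2 \<bullet> (M21 *v v1) + v2 \<bullet> (M22 *v v2) + v2 \<bullet> (M23 *v v3)
   + v3 \<bullet> (M31 *v v1) + v3 \<bullet> (M32 *v v2) + v3 \<bullet> (M33 *v v3)"
  by (simp add: blk3_mv inner_stack inner_add_right)

lemma inner_mv: "x \<bullet> (A *v y) = (transpose A *v x) \<bullet> (y::real^_)"
  by (simp add: dot_lmul_matrix)

lemma quad_zero:
  fixes c d :: real
  assumes "\<And>t. 2*t*c + t^2*d \<le> 0"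
  shows "c = 0"
proof (rule ccontr)
  assume "c \<noteq> 0"
  define t where "t = c / (\<bar>d\<bar> + 1)"
  have pos: "\<bar>d\<bar> + 1 > 0" by simp
  have "2*t*c + t^2*d \<le> 0" by (rule assms)
  hence "(2*t*c + t^2*d) * (\<bar>d\<bar>+1)^2 \<le> 0" using pos
    by (simp add: mult_nonpos_nonneg)
  moreover have te: "t * (\<bar>d\<bar>+1) = c" unfolding t_def using pos by simp
  moreover have "(2*t*c + t^2*d) * (\<bar>d\<bar>+1)^2 = 2*c*(t*(\<bar>d\<bar>+1))*(\<bar>d\<bar>+1) + (t*(\<bar>d\<bar>+1))^2*d"
    by (simp add: algebra_simps power2_eq_square)
  ultimately have "c^2 * (2*(\<bar>d\<bar>+1) + d) \<le> 0"
    by (simp add: algebra_simps power2_eq_square)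
  moreover have "c^2 > 0" using \<open>c \<noteq> 0\<close> by simp
  moreover have "2*(\<bar>d\<bar>+1) + d > 0" by (simp add: abs_if)
  ultimately show False by (metis mult_pos_pos not_le)
qed

lemma sym_inner:
  fixes M :: "real^'n^'n"
  assumes "transpose M = M"
  shows "x \<bullet> (M *v y) = (M *v x) \<bullet> y"
  using inner_mv[of x M y] assms by simp

lemma eig_exists:
  fixes M :: "real^'n^'n"
  assumes sym: "transpose M = M" and S: "subspace S" and inv: "\<And>x. x \<in> S \<Longrightarrow> M *v x \<in> S"
    and nz: "S \<noteq> {0}"
  shows "\<exists>v\<in>S. norm v = 1 \<and> M *v v = (v \<bullet> (M *v v)) *\<^sub>R v"
proof -
  let ?K = "S \<inter> sphere 0 1"
  have "compact ?K"
    by (simp add: S closed_subspace closed_Int_compact)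
  obtain x where x: "x \<in> S" "x \<noteq> 0" using nz S subspace_0 by blast
  hence "x /\<^sub>R norm x \<in> ?K" using S by (simp add: subspace_scale)
  hence Kne: "?K \<noteq> {}" by blast
  have "continuous_on ?K (\<lambda>v. v \<bullet> (M *v v))"
    by (intro continuous_intros linear_continuous_on) (auto intro: bounded_linear_intros)
  then obtain v where v: "v \<in> ?K" and vmax: "\<And>y. y \<in> ?K \<Longrightarrow> y \<bullet> (M *v y) \<le> v \<bullet> (M *v v)"
    using continuous_attains_sup[OF \<open>compact ?K\<close> Kne] by blast
  define l where "l = v \<bullet> (M *v v)"
  have vS: "v \<in> S" and vn: "norm v = 1" using v by auto
  have ray: "y \<bullet> (M *v y) - l * (y \<bullet> y) \<le> 0" if "y \<in> S" for y
  proof (cases "y = 0")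
    case True then show ?thesis by simp
  next
    case False
    have "y /\<^sub>R norm y \<in> ?K" using that False S by (simp add: subspace_scale)
    hence "(y /\<^sub>R norm y) \<bullet> (M *v (y /\<^sub>R norm y)) \<le> l" unfolding l_def by (rule vmax)
    hence "(y \<bullet> (M *v y)) / (norm y)^2 \<le> l"
      by (simp add: matrix_vector_mult_scaleR power2_eq_square field_simps)
    moreover have "(norm y)^2 > 0" using False by simp
    ultimately have "y \<bullet> (M *v y) \<le> l * (norm y)^2" by (simp add: field_simps)
    then show ?thesis by (simp add: power2_norm_eq_inner)
  qed
  have orth: "w \<bullet> (M *v v - l *\<^sub>R v) = 0" if w: "w \<in> S" for w
  proof -
    have "2*t*(w \<bullet> (M *v v - l *\<^sub>R v)) + t^2*(w \<bullet> (M *v w) - l * (w \<bullet> w)) \<le> 0" for t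
    proof -
      have "v + t *\<^sub>R w \<in> S" using S vS w by (simp add: subspace_add subspace_scale)
      from ray[OF this]
      have "(v + t *\<^sub>R w) \<bullet> (M *v (v + t *\<^sub>R w)) - l * ((v + t *\<^sub>R w) \<bullet> (v + t *\<^sub>R w)) \<le> 0" .
      moreover have "(v + t *\<^sub>R w) \<bullet> (M *v (v + t *\<^sub>R w)) - l * ((v + t *\<^sub>R w) \<bullet> (v + t *\<^sub>R w))
          = (v \<bullet> (M *v v) - l * (v \<bullet> v)) + 2*t*(w \<bullet> (M *v v - l *\<^sub>R v)) + t^2*(w \<bullet> (M *v w) - l * (w \<bullet> w))"
        using sym_inner[OF sym, of v w]
        by (simp add: matrix_vector_right_distrib matrix_vector_mult_scaleR inner_add_left inner_add_right
            inner_diff_right inner_commute[of v w] inner_commute[of "M *v v" w] algebra_simps power2_eq_square)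
      moreover have "v \<bullet> (M *v v) - l * (v \<bullet> v) = 0" using vn by (simp add: l_def power2_norm_eq_inner[symmetric])
      ultimately show ?thesis by simp
    qed
    then show ?thesis by (rule quad_zero)
  qed
  have "M *v v - l *\<^sub>R v \<in> S" using S vS inv by (simp add: subspace_diff subspace_scale)
  from orth[OF this] have "M *v v - l *\<^sub>R v = 0" by simp
  then show ?thesis using vS vn by (auto simp: l_def)
qed

lemma eig_basis:
  fixes M :: "real^'n^'n"
  assumes sym: "transpose M = M"
  shows "subspace S \<Longrightarrow> (\<forall>x\<in>S. M *v x \<in> S) \<Longrightarrow>
    \<exists>B. finite B \<and> B \<subseteq> S \<and> pairwise orthogonal B \<and>
        (\<forall>u\<in>B. norm u = 1 \<and> M *v u = (u \<bullet> (M *v u)) *\<^sub>R u) \<and> S \<subseteq> span B"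
proof (induction "dim S" arbitrary: S rule: less_induct)
  case less
  show ?case
  proof (cases "S \<subseteq> {0}")
    case True
    then show ?thesis by (intro exI[of _ "{}"]) auto
  next
    case False
    hence "S \<noteq> {0}" by auto
    from eig_exists[OF sym less.prems(1) _ this] less.prems(2)
    obtain v where vS: "v \<in> S" and vn: "norm v = 1" and ev: "M *v v = (v \<bullet> (M *v v)) *\<^sub>R v"
      by blast
    define S' where "S' = {x\<in>S. v \<bullet> x = 0}"
    have sub': "subspace S'"
      using less.prems(1) unfolding S'_def subspace_def by (auto simp: inner_add_right)
    have inv': "\<forall>x\<in>S'. M *v x \<in> S'"
    proof
      fix x assume x: "x \<in> S'"
      have "v \<bullet> (M *v x) = (M *v v) \<bullet> x" by (rule sym_inner[OF sym])
      also have "\<dots> = 0" using x ev by (metis (mono_tags, lifting) S'_def inner_scaleR_left mem_Collect_eq mult_zero_right)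
      finally show "M *v x \<in> S'" using x less.prems(2) unfolding S'_def by auto
    qed
    have "v \<bullet> v = 1" using vn by (simp add: power2_norm_eq_inner[symmetric])
    hence "v \<notin> S'" unfolding S'_def by auto
    hence "S' \<subset> S" using vS unfolding S'_def by blast
    hence "span S' \<subset> span S" using sub' less.prems(1) by (simp add: span_eq_iff[THEN iffD2])
    hence "dim S' < dim S" by (rule dim_psubset)
    from less.hyps[OF this sub' inv'] obtain B where
      B: "finite B" "B \<subseteq> S'" "pairwise orthogonal B"
         "\<forall>u\<in>B. norm u = 1 \<and> M *v u = (u \<bullet> (M *v u)) *\<^sub>R u" "S' \<subseteq> span B" by blast
    have vB: "v \<notin> B" using B(2) \<open>v \<notin> S'\<close> by auto
    show ?thesis
    proof (intro exI[of _ "insert v B"] conjI)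
      show "finite (insert v B)" using B by simp
      show "insert v B \<subseteq> S" using B(2) vS unfolding S'_def by auto
      show "pairwise orthogonal (insert v B)"
        using B(2,3) unfolding pairwise_insert S'_def
        by (auto simp: orthogonal_def inner_commute)
      show "\<forall>u\<in>insert v B. norm u = 1 \<and> M *v u = (u \<bullet> (M *v u)) *\<^sub>R u" using B(4) vn ev by auto
      show "S \<subseteq> span (insert v B)"
      proof
        fix x assume x: "x \<in> S"
        have "x - (v \<bullet> x) *\<^sub>R v \<in> S'"
          unfolding S'_def using x vS less.prems(1) \<open>v \<bullet> v = 1\<close>
          by (auto simp: subspace_diff subspace_scale inner_diff_right)
        hence "x - (v \<bullet> x) *\<^sub>R v \<in> span (insert v B)"
          using B(5) span_mono[of B "insert v B"] by auto
        moreover have "(v \<bullet> x) *\<^sub>R v \<in> span (insert v B)"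
          by (simp add: span_base span_scale)
        ultimately have "(x - (v \<bullet> x) *\<^sub>R v) + (v \<bullet> x) *\<^sub>R v \<in> span (insert v B)"
          by (rule span_add)
        then show "x \<in> span (insert v B)" by simp
      qed
    qed
  qed
qed

lemma sum_mv: "(sum f A) *v x = (\<Sum>i\<in>A. f i *v x)"
  by (induction A rule: infinite_finite_induct) (auto simp: matrix_vector_mult_add_rdistrib)

lemma mv_sum: "(M::real^'n^'m) *v (sum f A) = (\<Sum>i\<in>A. M *v f i)"
  by (induction A rule: infinite_finite_induct) (auto simp: matrix_vector_right_distrib)

lemma outer_mv: "outer u v *v x = (v \<bullet> x) *\<^sub>R (u::real^'n)"
  by (simp add: vec_eq_iff outer_def matrix_vector_mult_def inner_vec_def sum_distrib_left algebra_simps)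

lemma mv_axis: "((A::real^'n^'m) *v axis j 1) $ i = A $ i $ j"
  by (simp add: matrix_vector_mult_def axis_def if_distrib cong: if_cong)

lemma orthonormal_coeff:
  fixes B :: "(real^'n) set"
  assumes "finite B" "pairwise orthogonal B" "\<forall>u\<in>B. norm u = 1" "w \<in> B"
  shows "w \<bullet> (\<Sum>u\<in>B. c u *\<^sub>R u) = c w"
proof -
  have "w \<bullet> (\<Sum>u\<in>B. c u *\<^sub>R u) = (\<Sum>u\<in>B. c u * (w \<bullet> u))" by (simp add: inner_sum_right)
  also have "\<dots> = c w * (w \<bullet> w) + (\<Sum>u\<in>B-{w}. c u * (w \<bullet> u))"
    using assms by (simp add: sum.remove)
  also have "(\<Sum>u\<in>B-{w}. c u * (w \<bullet> u)) = 0"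
    using assms(2,4) by (intro sum.neutral) (auto simp: pairwise_def orthogonal_def)
  also have "w \<bullet> w = 1" using assms(3,4) by (metis norm_eq_1)
  finally show ?thesis by simp
qed

lemma orthonormal_expand:
  fixes B :: "(real^'n) set"
  assumes "finite B" "pairwise orthogonal B" "\<forall>u\<in>B. norm u = 1" "UNIV \<subseteq> span B"
  shows "x = (\<Sum>u\<in>B. (u \<bullet> x) *\<^sub>R u)"
proof -
  define y where "y = x - (\<Sum>u\<in>B. (u \<bullet> x) *\<^sub>R u)"
  have "orthogonal y w" if "w \<in> B" for w
    using orthonormal_coeff[OF assms(1-3) that, of "\<lambda>u. u \<bullet> x"] unfolding y_def orthogonal_def
    by (simp add: inner_diff_left inner_diff_right inner_commute)
  hence "orthogonal y y" using assms(4) by (meson UNIV_I orthogonal_to_span subsetD)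
  hence "y = 0" by (simp add: orthogonal_def)
  thus ?thesis unfolding y_def by simp
qed

lemma psd_zero:
  fixes S :: "real^'n^'n"
  assumes "pos_semidef S" "x \<bullet> (S *v x) = 0"
  shows "S *v x = 0"
proof -
  have sym: "transpose S = S" using assms(1) by (simp add: pos_semidef_def symmetric_mat_def)
  have "y \<bullet> (S *v x) = 0" for y
  proof -
    have "2*t*(-(y \<bullet> (S *v x))) + t^2*(-(y \<bullet> (S *v y))) \<le> 0" for t
    proof -
      have "(x + t *\<^sub>R y) \<bullet> (S *v (x + t *\<^sub>R y)) \<ge> 0" using assms(1) by (simp add: pos_semidef_def)
      moreover have "(x + t *\<^sub>R y) \<bullet> (S *v (x + t *\<^sub>R y)) = x \<bullet> (S *v x) + 2*t*(y \<bullet> (S *v x)) + t^2*(y \<bullet> (S *v y))"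
        using sym_inner[OF sym, of x y]
        by (simp add: matrix_vector_right_distrib matrix_vector_mult_scaleR inner_add_left inner_add_right
            inner_commute[of "S *v x" y] algebra_simps power2_eq_square)
      ultimately show ?thesis using assms(2) by simp
    qed
    from quad_zero[OF this] show ?thesis by simp
  qed
  from this[of "S *v x"] show ?thesis by simp
qed

lemma psd_sqrt_exists:
  fixes M :: "real^'n^'n"
  assumes "pos_semidef M"
  shows "\<exists>S. pos_semidef S \<and> S ** S = M"
proof -
  have sym: "transpose M = M" using assms by (simp add: pos_semidef_def symmetric_mat_def)
  obtain B where B: "finite B" "pairwise orthogonal B"
      "\<forall>u\<in>B. norm u = 1 \<and> M *v u = (u \<bullet> (M *v u)) *\<^sub>R u" "UNIV \<subseteq> span B"
    using eig_basis[OF sym, of UNIV] by auto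
  have Bn: "\<forall>u\<in>B. norm u = 1" using B(3) by auto
  define l where "l u = u \<bullet> (M *v u)" for u
  have lnn: "l u \<ge> 0" for u using assms by (simp add: l_def pos_semidef_def)
  define S where "S = (\<Sum>u\<in>B. sqrt (l u) *\<^sub>R outer u u)"
  have Sx: "S *v x = (\<Sum>u\<in>B. (sqrt (l u) * (u \<bullet> x)) *\<^sub>R u)" for x
    by (simp add: S_def sum_mv scaleR_matrix_vector_assoc[symmetric] outer_mv)
  have uS: "u \<bullet> (S *v x) = sqrt (l u) * (u \<bullet> x)" if "u \<in> B" for u x
    unfolding Sx by (rule orthonormal_coeff[OF B(1,2) Bn that])
  have symS: "transpose S = S"
    by (simp add: S_def vec_eq_iff transpose_def outer_def mult.commute)
  have "S ** S = M"
  proof (subst matrix_eq, intro allI)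
    fix x
    have "(S ** S) *v x = S *v (S *v x)" by (simp add: matrix_vector_mul_assoc)
    also have "\<dots> = (\<Sum>u\<in>B. (l u * (u \<bullet> x)) *\<^sub>R u)"
      unfolding Sx[of "S *v x"] using lnn
      by (intro sum.cong refl) (simp add: uS mult.assoc[symmetric] real_sqrt_mult_self)
    also have "\<dots> = (\<Sum>u\<in>B. (u \<bullet> x) *\<^sub>R (M *v u))"
      using B(3) by (intro sum.cong refl) (metis l_def mult.commute scaleR_scaleR)
    also have "\<dots> = M *v (\<Sum>u\<in>B. (u \<bullet> x) *\<^sub>R u)"
      by (simp add: mv_sum matrix_vector_mult_scaleR)
    also have "\<dots> = M *v x" using orthonormal_expand[OF B(1,2) Bn B(4), of x] by simp
    finally show "(S ** S) *v x = M *v x" .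
  qed
  moreover have "pos_semidef S"
    unfolding pos_semidef_def symmetric_mat_def
  proof (intro conjI allI symS)
    fix v
    have "v \<bullet> (S *v v) = (\<Sum>u\<in>B. sqrt (l u) * (u \<bullet> v)^2)"
      by (simp add: Sx inner_sum_right inner_commute power2_eq_square mult.assoc)
    also have "\<dots> \<ge> 0" using lnn by (intro sum_nonneg) simp
    finally show "v \<bullet> (S *v v) \<ge> 0" .
  qed
  ultimately show ?thesis by blast
qed

lemma trace_form: "trace (A::real^'n^'n) = (\<Sum>i\<in>UNIV. axis i 1 \<bullet> (A *v axis i 1))"
  by (simp add: trace_def inner_axis' mv_axis)

lemma psd_sqrt_unique:
  fixes S R :: "real^'n^'n"
  assumes S: "pos_semidef S" and R: "pos_semidef R" and eq: "S ** S = R ** R"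
  shows "S = R"
proof -
  have sS: "transpose S = S" using S by (simp add: pos_semidef_def symmetric_mat_def)
  have sR: "transpose R = R" using R by (simp add: pos_semidef_def symmetric_mat_def)
  define D where "D = S - R"
  have sD: "transpose D = D" using sS sR by (simp add: D_def transpose_def vec_eq_iff)
  have "(S ** D + D ** R) *v x = 0 *v x" for x
    using arg_cong[OF eq, of "\<lambda>A. A *v x"]
    by (simp add: D_def matrix_vector_mult_add_rdistrib matrix_vector_mul_assoc[symmetric]
        matrix_vector_mult_diff_rdistrib matrix_vector_mult_diff_distrib)
  hence z: "S ** D + D ** R = 0" by (subst matrix_eq) blast
  have t1: "trace (D ** S ** D) = (\<Sum>i\<in>UNIV. (D *v axis i 1) \<bullet> (S *v (D *v axis i 1)))"
    unfolding trace_form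
    by (simp add: matrix_vector_mul_assoc[symmetric] sym_inner[OF sD])
  have t2: "trace (D ** R ** D) = (\<Sum>i\<in>UNIV. (D *v axis i 1) \<bullet> (R *v (D *v axis i 1)))"
    unfolding trace_form
    by (simp add: matrix_vector_mul_assoc[symmetric] sym_inner[OF sD])
  have "trace (D ** S ** D) + trace (D ** R ** D) = trace (D ** (S ** D + D ** R))"
    by (metis matrix_add_ldistrib matrix_mul_assoc trace_add trace_mul_sym)
  also have "\<dots> = 0" using z by (simp add: trace_def)
  finally have sum0: "trace (D ** S ** D) + trace (D ** R ** D) = 0" .
  have nnS: "\<And>i. (D *v axis i 1) \<bullet> (S *v (D *v axis i 1)) \<ge> 0" using S by (simp add: pos_semidef_def)
  have nnR: "\<And>i. (D *v axis i 1) \<bullet> (R *v (D *v axis i 1)) \<ge> 0" using R by (simp add: pos_semidef_def)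
  have "trace (D ** S ** D) \<ge> 0" "trace (D ** R ** D) \<ge> 0"
    unfolding t1 t2 by (auto intro: sum_nonneg nnS nnR)
  hence "trace (D ** S ** D) = 0" "trace (D ** R ** D) = 0" using sum0 by linarith+
  hence "\<forall>i\<in>UNIV. (D *v axis i 1) \<bullet> (S *v (D *v axis i 1)) = 0"
        "\<forall>i\<in>UNIV. (D *v axis i 1) \<bullet> (R *v (D *v axis i 1)) = 0"
    unfolding t1 t2 by (simp_all add: sum_nonneg_eq_0_iff nnS nnR)
  hence "S *v (D *v axis i 1) = 0" "R *v (D *v axis i 1) = 0" for i
    using psd_zero[OF S] psd_zero[OF R] by auto
  hence "D *v (D *v axis i 1) = 0" for i by (simp add: D_def matrix_vector_mult_diff_rdistrib)
  hence "(D *v axis i 1) \<bullet> (D *v axis i 1) = 0" for i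
    by (metis inner_zero_right sym_inner[OF sD])
  hence "D *v axis i 1 = 0" for i by simp
  hence "D = 0" by (simp add: vec_eq_iff mv_axis[symmetric])
  thus ?thesis by (simp add: D_def)
qed

lemma psd_sqrt_props:
  assumes "pos_semidef (M::real^'n^'n)"
  shows "pos_semidef (psd_sqrt M) \<and> psd_sqrt M ** psd_sqrt M = M"
proof -
  obtain S where "pos_semidef S \<and> S ** S = M" using psd_sqrt_exists[OF assms] by blast
  hence "\<exists>!S. pos_semidef S \<and> S ** S = M" using psd_sqrt_unique by blast
  thus ?thesis unfolding psd_sqrt_def by (rule theI')
qed

lemma fi_props:
  assumes "forward_interval J"
  shows "0 \<in> J" "\<And>s t. t \<in> J \<Longrightarrow> 0 \<le> s \<Longrightarrow> s \<le> t \<Longrightarrow> s \<in> J" "\<And>t. t \<in> J \<Longrightarrow> 0 \<le> t"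
proof -
  from assms consider (a) b where "b > 0" "J = {0..<b}" | (b) "J = {0..}"
    unfolding forward_interval_def by blast
  then show "0 \<in> J" "\<And>s t. t \<in> J \<Longrightarrow> 0 \<le> s \<Longrightarrow> s \<le> t \<Longrightarrow> s \<in> J" "\<And>t. t \<in> J \<Longrightarrow> 0 \<le> t"
    by (cases; force)+
qed

lemma ode_sign:
  fixes \<phi> \<phi>' :: "real \<Rightarrow> real"
  assumes J: "forward_interval J"
    and der: "\<And>t. t \<in> J \<Longrightarrow> (\<phi> has_real_derivative \<phi>' t) (at t within J)"
    and neg: "\<And>t. t \<in> J \<Longrightarrow> \<phi> t = 0 \<Longrightarrow> \<phi>' t < 0"
    and init: "\<phi> 0 \<le> 0"
    and t1: "t1 \<in> J"
  shows "\<phi> t1 \<le> 0"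
proof (rule ccontr)
  assume pos: "\<not> \<phi> t1 \<le> 0"
  have sub: "{0..t1} \<subseteq> J" using fi_props(2)[OF J t1] by auto
  have "continuous_on J \<phi>"
    unfolding continuous_on_eq_continuous_within
    using der DERIV_continuous by blast
  hence cont: "continuous_on {0..t1} \<phi>" using sub continuous_on_subset by blast
  define U where "U = {s\<in>{0..t1}. \<phi> s \<le> 0}"
  have "U = {0..t1} \<inter> \<phi> -` {..0}" unfolding U_def by auto
  hence UU: "U = {0..t1} \<inter> \<phi> -` {..0}" .
  have "closed U" unfolding UU by (rule continuous_closed_preimage[OF cont]) auto
  hence "compact ({0..t1} \<inter> U)" by (rule compact_Int_closed[OF compact_Icc])
  moreover have "{0..t1} \<inter> U = U" unfolding U_def by blast
  ultimately have "compact U" by simp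
  have "0 \<le> t1" using fi_props(3)[OF J t1] .
  hence "0 \<in> U" using init unfolding U_def by auto
  then obtain s0 where s0: "s0 \<in> U" and smax: "\<And>s. s \<in> U \<Longrightarrow> s \<le> s0"
    using compact_attains_sup[OF \<open>compact U\<close>] by blast
  have s0r: "0 \<le> s0" "s0 \<le> t1" "\<phi> s0 \<le> 0" using s0 unfolding U_def by auto
  have s0t1: "s0 < t1" using s0r pos by (metis order_le_less)
  have posr: "\<phi> s > 0" if "s0 < s" "s \<le> t1" for s
  proof (rule ccontr)
    assume "\<not> \<phi> s > 0"
    hence "s \<in> U" using that s0r unfolding U_def by auto
    from smax[OF this] that show False by simp
  qed
  obtain x where x: "s0 \<le> x" "x \<le> t1" "\<phi> x = 0"
  proof -
    have "continuous_on {s0..t1} \<phi>" using continuous_on_subset[OF cont, of "{s0..t1}"] s0r by auto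
    from IVT'[of \<phi> s0 0 t1, OF s0r(3) _ s0r(2) this] pos show ?thesis using that by force
  qed
  have "x = s0"
  proof (rule ccontr)
    assume "x \<noteq> s0" hence "s0 < x" using x by simp
    from posr[OF this x(2)] x(3) show False by simp
  qed
  hence z: "\<phi> s0 = 0" using x by simp
  have s0J: "s0 \<in> J" using sub s0r(1,2) by auto
  from has_real_derivative_neg_dec_right[OF der[OF s0J] neg[OF s0J z]]
  obtain d where d1: "d > 0" and d2: "\<forall>h > 0. s0 + h \<in> J \<longrightarrow> h < d \<longrightarrow> \<phi> s0 > \<phi> (s0 + h)"
    by blast
  have d: "d > 0" "\<And>h. h > 0 \<Longrightarrow> s0 + h \<in> J \<Longrightarrow> h < d \<Longrightarrow> \<phi> s0 > \<phi> (s0 + h)"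
    using d1 d2 by auto
  define h where "h = min (d/2) (t1 - s0)"
  have h: "h > 0" "h < d" "s0 + h \<le> t1" using d(1) s0t1 unfolding h_def by linarith+
  have "s0 + h \<in> J" using sub h(1,3) s0r(1) by auto
  from d(2)[OF h(1) this h(2)] have "\<phi> s0 > \<phi> (s0 + h)" .
  moreover have "\<phi> (s0 + h) > 0" using posr[of "s0+h"] h(1,3) by simp
  ultimately show False using z by simp
qed

lemma poly_has_deriv: "poly_fun f \<Longrightarrow> \<exists>D. (f has_derivative D) (at x)"
proof (induction rule: poly_fun.induct)
  case (poly_const c) show ?case by (rule exI, rule has_derivative_const)
next
  case (poly_coord i) show ?case
    by (rule exI, rule bounded_linear_imp_has_derivative[OF bounded_linear_vec_nth])
next
  case (poly_add f g) then show ?case by (blast intro: has_derivative_add)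
next
  case (poly_mult f g) then show ?case by (blast intro: has_derivative_mult)
qed

lemma grad_eq:
  assumes "(f has_derivative D) (at x)"
  shows "D v = grad f x \<bullet> v"
proof -
  have fd: "frechet_derivative f (at x) = D" using frechet_derivative_at[OF assms] by simp
  have lin: "linear D" using has_derivative_linear[OF assms] .
  have "D v = D (\<Sum>i\<in>UNIV. (v$i) *\<^sub>R axis i 1)"
    using basis_expansion[of v] by (simp add: scalar_mult_eq_scaleR)
  also have "\<dots> = (\<Sum>i\<in>UNIV. (v$i) * D (axis i 1))"
    by (simp add: linear_sum[OF lin] linear_scale[OF lin])
  also have "\<dots> = grad f x \<bullet> v"
    by (simp add: grad_def fd inner_vec_def mult.commute)
  finally show ?thesis .
qed

lemma chain_h:
  assumes hd: "(h has_derivative D) (at (x t))"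
    and xd: "(x has_vector_derivative v) (at t within J)"
  shows "((\<lambda>s. h (x s)) has_real_derivative (grad h (x t) \<bullet> v)) (at t within J)"
proof -
  have "((h \<circ> x) has_derivative (D \<circ> (\<lambda>s. s *\<^sub>R v))) (at t within J)"
    using xd hd unfolding has_vector_derivative_def
    by (intro diff_chain_within) (auto intro: has_derivative_at_withinI)
  moreover have "(D \<circ> (\<lambda>s. s *\<^sub>R v)) = (\<lambda>s. s * (grad h (x t) \<bullet> v))"
    using linear_scale[OF has_derivative_linear[OF hd]] grad_eq[OF hd] by (auto simp: fun_eq_iff)
  moreover have "(\<lambda>s. s * (grad h (x t) \<bullet> v)) = (*) (grad h (x t) \<bullet> v)" by (auto simp: fun_eq_iff)
  ultimately show ?thesis unfolding has_field_derivative_def by (simp add: o_def)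
qed

lemma transpose_outer: "transpose (outer u v) = outer v u"
  by (simp add: transpose_def outer_def vec_eq_iff mult.commute)

lemma transpose_uminus: "transpose (- A) = - transpose (A::real^'n^'m)"
  by (simp add: transpose_def vec_eq_iff)

lemma mv_uminus: "(- A) *v x = - (A *v (x::real^_))"
  by (simp add: matrix_vector_mult_def vec_eq_iff sum_negf)

lemma qf_sum: "x \<bullet> ((\<Sum>j<T. \<tau> j *\<^sub>R C j) *v y) = (\<Sum>j<T. \<tau> j * (x \<bullet> (C j *v (y::real^_))))"
  by (simp add: sum_mv inner_sum_right scaleR_matrix_vector_assoc[symmetric])

lemma inner_tr: "x \<bullet> (transpose A *v y) = (A *v x) \<bullet> (y::real^_)"
  using inner_mv[of x "transpose A" y] by simp

definition zmat :: "real ^ 'a ^ 'n \<Rightarrow> real ^ 'b ^ 'n \<Rightarrow> real ^ 'n ^ ('a + 'b)" where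
  "zmat A B = (\<chi> k j. case k of Inl i \<Rightarrow> A $ j $ i | Inr l \<Rightarrow> B $ j $ l)"

lemma zmat_tr: "transpose (zmat A B) *v stack z y = A *v z + B *v y"
  by (simp add: vec_eq_iff zmat_def transpose_def matrix_vector_mult_def stack_def sum_UNIV_plus)

lemma data_term:
  fixes u :: "real^'n" and r :: "real^'p" and dx d :: "real^'n" and Zt :: "real^'n^'p"
  assumes dx: "dx = transpose Zt *v r + d" and nd: "(norm d)^2 \<le> \<omega>"
  shows "u \<bullet> ((- (\<omega> *\<^sub>R mat 1) + outer dx dx) *v u) + u \<bullet> (transpose (- outer r dx) *v (Zt *v u))
       + (Zt *v u) \<bullet> ((- outer r dx) *v u) + (Zt *v u) \<bullet> (outer r r *v (Zt *v u)) \<le> 0"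
proof -
  have rz: "r \<bullet> (Zt *v u) = (transpose Zt *v r) \<bullet> u" by (simp add: inner_mv)
  define \<alpha> where "\<alpha> = dx \<bullet> u"
  define \<beta> where "\<beta> = r \<bullet> (Zt *v u)"
  have v1: "(- (\<omega> *\<^sub>R mat 1) + outer dx dx) *v u = (dx \<bullet> u) *\<^sub>R dx - \<omega> *\<^sub>R u"
    by (simp only: matrix_vector_mult_add_rdistrib mv_uminus outer_mv scaleR_matrix_vector_assoc[symmetric]
        matrix_vector_mul_lid) simp
  have e1: "u \<bullet> ((- (\<omega> *\<^sub>R mat 1) + outer dx dx) *v u) = - \<omega> * (u \<bullet> u) + \<alpha>^2"
    unfolding v1 \<alpha>_def by (simp add: inner_diff_right inner_commute[of u dx] power2_eq_square)
  have e2: "u \<bullet> (transpose (- outer r dx) *v (Zt *v u)) = - (\<alpha> * \<beta>)"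
    by (simp add: transpose_uminus transpose_outer mv_uminus outer_mv \<alpha>_def \<beta>_def inner_commute[of u dx])
  have e3: "(Zt *v u) \<bullet> ((- outer r dx) *v u) = - (\<alpha> * \<beta>)"
    by (simp add: mv_uminus outer_mv \<alpha>_def \<beta>_def inner_commute[of "Zt *v u" r])
  have e4: "(Zt *v u) \<bullet> (outer r r *v (Zt *v u)) = \<beta>^2"
    by (simp add: outer_mv \<beta>_def inner_commute[of "Zt *v u" r] power2_eq_square)
  have ab: "\<alpha> - \<beta> = d \<bullet> u" unfolding \<alpha>_def \<beta>_def rz using dx by (simp add: inner_add_left)
  have "u \<bullet> ((- (\<omega> *\<^sub>R mat 1) + outer dx dx) *v u) + u \<bullet> (transpose (- outer r dx) *v (Zt *v u))
       + (Zt *v u) \<bullet> ((- outer r dx) *v u) + (Zt *v u) \<bullet> (outer r r *v (Zt *v u))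
      = - \<omega> * (u \<bullet> u) + (\<alpha> - \<beta>)^2"
    unfolding e1 e2 e3 e4 by (simp add: power2_eq_square algebra_simps)
  also have "(\<alpha> - \<beta>)^2 = (d \<bullet> u)^2" by (simp add: ab)
  also have "(d \<bullet> u)^2 \<le> (d \<bullet> d) * (u \<bullet> u)"
    by (rule Cauchy_Schwarz_ineq)
  also have "\<dots> \<le> \<omega> * (u \<bullet> u)" using nd
    by (intro mult_right_mono) (simp_all add: power2_norm_eq_inner)
  finally show ?thesis by simp
qed

lemma lmi_conseq:
  fixes Ai :: "real^'p^'p" and Bi :: "real^'n^'p" and Zt :: "real^'n^'p"
    and c :: "nat \<Rightarrow> real^'n^'n" and b :: "nat \<Rightarrow> real^'n^'p" and a :: "nat \<Rightarrow> real^'p^'p"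
  assumes LMI: "neg_semidef (blk3
        (- mat 1 - (\<Sum>j<T. \<tau> j *\<^sub>R c j)) (transpose Bi - (\<Sum>j<T. \<tau> j *\<^sub>R transpose (b j))) (transpose Bi)
        (Bi - (\<Sum>j<T. \<tau> j *\<^sub>R b j)) (Ai - (\<Sum>j<T. \<tau> j *\<^sub>R a j)) 0
        Bi 0 (- Ai))"
    and inv: "Ai ** Ainv = mat 1" and symA: "transpose Ai = Ai"
    and tau: "\<And>j. j < T \<Longrightarrow> \<tau> j \<ge> 0"
    and dt: "\<And>j. j < T \<Longrightarrow> u \<bullet> (c j *v u) + u \<bullet> (transpose (b j) *v (Zt *v u))
       + (Zt *v u) \<bullet> (b j *v u) + (Zt *v u) \<bullet> (a j *v (Zt *v u)) \<le> 0"
  shows "(Zt *v u + Ainv *v (Bi *v u)) \<bullet> (Ai *v (Zt *v u + Ainv *v (Bi *v u))) \<le> u \<bullet> u"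
proof -
  define w where "w = Ainv *v (Bi *v u)"
  define z where "z = Zt *v u"
  have Aw: "Ai *v w = Bi *v u" unfolding w_def by (metis inv matrix_vector_mul_assoc matrix_vector_mul_lid)
  define D where "D j = u \<bullet> (c j *v u) + u \<bullet> (transpose (b j) *v z) + z \<bullet> (b j *v u) + z \<bullet> (a j *v z)" for j
  have Dn: "(\<Sum>j<T. \<tau> j * D j) \<le> 0"
    using tau dt unfolding D_def z_def by (intro sum_nonpos) (simp add: mult_nonneg_nonpos)
  have "stack u (stack z w) \<bullet> (blk3
        (- mat 1 - (\<Sum>j<T. \<tau> j *\<^sub>R c j)) (transpose Bi - (\<Sum>j<T. \<tau> j *\<^sub>R transpose (b j))) (transpose Bi)
        (Bi - (\<Sum>j<T. \<tau> j *\<^sub>R b j)) (Ai - (\<Sum>j<T. \<tau> j *\<^sub>R a j)) 0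
        Bi 0 (- Ai) *v stack u (stack z w)) \<le> 0"
    using LMI unfolding neg_semidef_def by blast
  also have "stack u (stack z w) \<bullet> (blk3
        (- mat 1 - (\<Sum>j<T. \<tau> j *\<^sub>R c j)) (transpose Bi - (\<Sum>j<T. \<tau> j *\<^sub>R transpose (b j))) (transpose Bi)
        (Bi - (\<Sum>j<T. \<tau> j *\<^sub>R b j)) (Ai - (\<Sum>j<T. \<tau> j *\<^sub>R a j)) 0
        Bi 0 (- Ai) *v stack u (stack z w))
     = (- (u \<bullet> u) - (\<Sum>j<T. \<tau> j * (u \<bullet> (c j *v u))))
       + ((Bi *v u) \<bullet> z - (\<Sum>j<T. \<tau> j * (u \<bullet> (transpose (b j) *v z))))
       + (Bi *v u) \<bullet> w
       + (z \<bullet> (Bi *v u) - (\<Sum>j<T. \<tau> j * (z \<bullet> (b j *v u))))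
       + (z \<bullet> (Ai *v z) - (\<Sum>j<T. \<tau> j * (z \<bullet> (a j *v z))))
       + 0 + w \<bullet> (Bi *v u) + 0 - w \<bullet> (Ai *v w)"
    unfolding qf3
    by (simp only: matrix_vector_mult_diff_rdistrib inner_diff_right qf_sum mv_uminus inner_minus_right
        matrix_vector_mul_lid inner_tr matrix_vector_mult_0 inner_zero_right)
  also have "\<dots> = - (u \<bullet> u) - (\<Sum>j<T. \<tau> j * D j) + 2 * (z \<bullet> (Bi *v u)) + z \<bullet> (Ai *v z) + w \<bullet> (Bi *v u)"
    unfolding D_def Aw
    by (simp add: sum.distrib distrib_left inner_commute[of "Bi *v u"])
  finally have main: "- (u \<bullet> u) - (\<Sum>j<T. \<tau> j * D j) + 2 * (z \<bullet> (Bi *v u)) + z \<bullet> (Ai *v z) + w \<bullet> (Bi *v u) \<le> 0" .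
  have "(z + w) \<bullet> (Ai *v (z + w)) = z \<bullet> (Ai *v z) + 2 * (z \<bullet> (Bi *v u)) + w \<bullet> (Bi *v u)"
    using sym_inner[OF symA, of w z] Aw
    by (simp add: matrix_vector_right_distrib inner_add_left inner_add_right inner_commute[of w "Bi *v u"] inner_commute[of "Bi *v u" z])
  with main Dn show ?thesis unfolding z_def w_def by linarith
qed

definition one1 :: "real^unit" where "one1 = (\<chi> _. 1)"

lemma sum_unit: "(\<Sum>i\<in>(UNIV::unit set). f i) = f ()"
  by (simp add: UNIV_unit)

lemma one1_scal: "one1 \<bullet> (scal_mat a *v one1) = a"
  by (simp add: one1_def scal_mat_def matrix_vector_mult_def inner_vec_def sum_unit)

lemma one1_row: "one1 \<bullet> (transpose (col_mat y) *v v) = y \<bullet> v"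
  by (simp add: one1_def col_mat_def transpose_def matrix_vector_mult_def inner_vec_def sum_unit)

lemma one1_col: "v \<bullet> (col_mat y *v one1) = v \<bullet> y"
  by (simp add: one1_def col_mat_def matrix_vector_mult_def inner_vec_def sum_unit)

lemma H_conseq:
  fixes P :: "real^'p^'p" and Q :: "real^'n^'n" and w :: "real^'p" and g :: "real^'n"
  assumes neg: "stack one1 (stack v2 v3) \<bullet> (blk3
        (scal_mat c0) (transpose (col_mat (\<eta> *\<^sub>R (P *v w)))) (transpose (col_mat (Q *v g)))
        (col_mat (\<eta> *\<^sub>R (P *v w))) (- (2 * \<eta>) *\<^sub>R mat 1) 0
        (col_mat (Q *v g)) 0 (- (2 * \<eta>) *\<^sub>R mat 1) *v stack one1 (stack v2 v3)) \<le> 0"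
    and v2: "v2 = (1/2) *\<^sub>R (P *v w)" and v3: "v3 = (1/(2*\<eta>)) *\<^sub>R (Q *v g)"
    and Q: "transpose Q = Q" "Q ** Q = mat 1" and eta: "\<eta> > 0"
  shows "c0 + \<eta> / 2 * ((P *v w) \<bullet> (P *v w)) + (g \<bullet> g) / (2 * \<eta>) \<le> 0"
proof -
  have qq: "(Q *v g) \<bullet> (Q *v g) = g \<bullet> g"
    using sym_inner[OF Q(1), of g "Q *v g"] Q(2) by (simp add: matrix_vector_mul_assoc)
  define s where "s = (P *v w) \<bullet> (P *v w)"
  define q where "q = g \<bullet> g"
  have "stack one1 (stack v2 v3) \<bullet> (blk3
        (scal_mat c0) (transpose (col_mat (\<eta> *\<^sub>R (P *v w)))) (transpose (col_mat (Q *v g)))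
        (col_mat (\<eta> *\<^sub>R (P *v w))) (- (2 * \<eta>) *\<^sub>R mat 1) 0
        (col_mat (Q *v g)) 0 (- (2 * \<eta>) *\<^sub>R mat 1) *v stack one1 (stack v2 v3))
      = c0 + \<eta>/2 * s + 1/(2*\<eta>) * q
        + \<eta>/2 * s + (-(2*\<eta>)) * (1/4) * s
        + 1/(2*\<eta>) * q + (-(2*\<eta>)) * (1/(2*\<eta>))^2 * q"
    unfolding qf3 one1_scal one1_row one1_col v2 v3
    by (simp add: scaleR_matrix_vector_assoc[symmetric] mv_uminus qq s_def q_def power2_eq_square)
  also have "\<dots> = c0 + \<eta> / 2 * s + q / (2 * \<eta>)"
    using eta by (simp add: field_simps power2_eq_square)
  finally show ?thesis using neg unfolding s_def q_def by linarith
qed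

lemma cs_form:
  fixes A :: "real^'p^'p"
  assumes sym: "transpose A = A" and psd: "\<And>v. v \<bullet> (A *v v) \<ge> 0"
  shows "(x \<bullet> (A *v y))^2 \<le> (x \<bullet> (A *v x)) * (y \<bullet> (A *v y))"
proof -
  have q: "x \<bullet> (A *v x) + 2*t*(x \<bullet> (A *v y)) + t^2 * (y \<bullet> (A *v y)) \<ge> 0" for t
  proof -
    have "(x + t *\<^sub>R y) \<bullet> (A *v (x + t *\<^sub>R y)) \<ge> 0" by (rule psd)
    also have "(x + t *\<^sub>R y) \<bullet> (A *v (x + t *\<^sub>R y)) = x \<bullet> (A *v x) + 2*t*(x \<bullet> (A *v y)) + t^2 * (y \<bullet> (A *v y))"
      using sym_inner[OF sym, of y x]
      by (simp add: matrix_vector_right_distrib matrix_vector_mult_scaleR inner_add_left inner_add_right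
          inner_commute[of "A *v x" y] inner_commute[of "A *v y" x] algebra_simps power2_eq_square)
    finally show ?thesis .
  qed
  show ?thesis
  proof (cases "y \<bullet> (A *v y) = 0")
    case True
    have "x \<bullet> (A *v y) = 0"
    proof (rule ccontr)
      assume nz: "x \<bullet> (A *v y) \<noteq> 0"
      define t where "t = - (x \<bullet> (A *v x) + 1) / (2 * (x \<bullet> (A *v y)))"
      have "x \<bullet> (A *v x) + 2*t*(x \<bullet> (A *v y)) = -1" unfolding t_def using nz by (simp add: field_simps)
      with q[of t] True show False by simp
    qed
    then show ?thesis using True by simp
  next
    case False
    hence pos: "y \<bullet> (A *v y) > 0" using psd[of y] by simp
    define t where "t = - (x \<bullet> (A *v y)) / (y \<bullet> (A *v y))"
    have "x \<bullet> (A *v x) + 2*t*(x \<bullet> (A *v y)) + t^2 * (y \<bullet> (A *v y)) \<ge> 0" by (rule q)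
    hence "(x \<bullet> (A *v x) + 2*t*(x \<bullet> (A *v y)) + t^2 * (y \<bullet> (A *v y))) * (y \<bullet> (A *v y)) \<ge> 0"
      using pos by simp
    moreover have "(x \<bullet> (A *v x) + 2*t*(x \<bullet> (A *v y)) + t^2 * (y \<bullet> (A *v y))) * (y \<bullet> (A *v y))
       = (x \<bullet> (A *v x)) * (y \<bullet> (A *v y)) - (x \<bullet> (A *v y))^2"
      unfolding t_def using pos by (simp add: field_simps power2_eq_square)
    ultimately show ?thesis by simp
  qed
qed

lemma pd_inv:
  fixes A :: "real^'p^'p"
  assumes "pos_def A"
  shows "A ** matrix_inv A = mat 1" "matrix_inv A ** A = mat 1" "pos_semidef (matrix_inv A)"
proof -
  have symA: "transpose A = A" using assms by (simp add: pos_def_def symmetric_mat_def)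
  have "\<forall>x. A *v x = 0 \<longrightarrow> x = 0"
  proof (intro allI impI)
    fix x assume "A *v x = 0"
    hence "x \<bullet> (A *v x) = 0" by simp
    thus "x = 0" using assms unfolding pos_def_def by (metis less_irrefl)
  qed
  hence "\<exists>B. B ** A = mat 1" using matrix_left_invertible_ker by blast
  hence "invertible A" using invertible_left_inverse by blast
  hence "\<exists>A'. A ** A' = mat 1 \<and> A' ** A = mat 1" unfolding invertible_def .
  hence inv: "A ** matrix_inv A = mat 1 \<and> matrix_inv A ** A = mat 1"
    unfolding matrix_inv_def by (rule someI_ex)
  thus r: "A ** matrix_inv A = mat 1" and l: "matrix_inv A ** A = mat 1" by auto
  have "transpose (matrix_inv A) ** A = mat 1"
    using arg_cong[OF r, of transpose] symA by (simp add: matrix_transpose_mul)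
  hence "transpose (matrix_inv A) = matrix_inv A"
    by (metis r matrix_mul_assoc matrix_mul_lid matrix_mul_rid)
  moreover have "v \<bullet> (matrix_inv A *v v) \<ge> 0" for v
  proof -
    have "v = A *v (matrix_inv A *v v)" by (simp add: matrix_vector_mul_assoc r)
    hence "v \<bullet> (matrix_inv A *v v) = (matrix_inv A *v v) \<bullet> (A *v (matrix_inv A *v v))"
      by (metis inner_commute)
    also have "\<dots> \<ge> 0" using assms unfolding pos_def_def
      by (metis inner_zero_left matrix_vector_mult_0_right order_le_less)
    finally show ?thesis .
  qed
  ultimately show "pos_semidef (matrix_inv A)" by (simp add: pos_semidef_def symmetric_mat_def)
qed

lemma sos_nonneg: "sos f \<Longrightarrow> f x \<ge> 0"
  unfolding sos_def by (auto intro!: sum_list_nonneg)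

lemma qf_sum_list:
  fixes F :: "'h \<Rightarrow> real^'c^'k"
  shows "v \<bullet> ((\<Sum>Hi\<leftarrow>Hs. transpose (F Hi) ** F Hi) *v v) \<ge> (0::real)"
proof (induction Hs)
  case Nil then show ?case by simp
next
  case (Cons a Hs)
  have "(transpose (F a) ** F a) *v v = transpose (F a) *v (F a *v v)"
    by (simp only: matrix_vector_mul_assoc)
  hence "v \<bullet> ((transpose (F a) ** F a) *v v) = (F a *v v) \<bullet> (F a *v v)"
    using inner_tr[of v "F a" "F a *v v"] by simp
  hence "v \<bullet> ((transpose (F a) ** F a) *v v) \<ge> 0" by simp
  with Cons show ?case by (simp add: matrix_vector_mult_add_rdistrib inner_add_right)
qed

lemma sos_mat_neg:
  fixes H :: "real^'n \<Rightarrow> real^'r^'r"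
  assumes "sos_mat (\<lambda>x. - H x)"
  shows "v \<bullet> (H x *v v) \<le> 0"
proof -
  obtain Hs :: "(real^'n \<Rightarrow> real^'r^'r) list" where "(\<lambda>x. - H x) = (\<lambda>x. \<Sum>Hi\<leftarrow>Hs. transpose (Hi x) ** Hi x)"
    using assms unfolding sos_mat_def by blast
  hence "- H x = (\<Sum>Hi\<leftarrow>Hs. transpose (Hi x) ** Hi x)" by metis
  hence "v \<bullet> ((- H x) *v v) \<ge> 0" using qf_sum_list[of v "\<lambda>Hi. Hi x" Hs] by simp
  thus ?thesis by (simp add: mv_uminus)
qed

lemma deriv_bound:
  fixes Ai :: "real^'p^'p" and Ainv P :: "real^'p^'p" and Zt :: "real^'n^'p" and Bi :: "real^'n^'p"
    and g :: "real^'n" and w :: "real^'p"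
  assumes symA: "transpose Ai = Ai" and psdA: "\<And>v. v \<bullet> (Ai *v v) \<ge> 0"
    and inv: "Ai ** Ainv = mat 1"
    and symP: "transpose P = P" and PP: "P ** P = Ainv"
    and hE: "(Zt *v g + Ainv *v (Bi *v g)) \<bullet> (Ai *v (Zt *v g + Ainv *v (Bi *v g))) \<le> g \<bullet> g"
    and Hc: "L + g \<bullet> (transpose (- (Ainv ** Bi)) *v w) + \<eta> / 2 * ((P *v w) \<bullet> (P *v w)) + (g \<bullet> g) / (2 * \<eta>) \<le> 0"
    and eta: "\<eta> > 0"
  shows "g \<bullet> (transpose Zt *v w) \<le> - L"
proof -
  define e where "e = Zt *v g + Ainv *v (Bi *v g)"
  define s where "s = (P *v w) \<bullet> (P *v w)"
  define q where "q = g \<bullet> g"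
  define m where "m = \<eta> / 2 * s + q / (2 * \<eta>)"
  have s0: "s \<ge> 0" "q \<ge> 0" unfolding s_def q_def by simp_all
  have m0: "m \<ge> 0" unfolding m_def using s0 eta by simp
  have c1: "g \<bullet> (transpose (- (Ainv ** Bi)) *v w) = - ((Ainv *v (Bi *v g)) \<bullet> w)"
    unfolding inner_tr by (simp add: mv_uminus matrix_vector_mul_assoc)
  have c2: "g \<bullet> (transpose Zt *v w) = e \<bullet> w - (Ainv *v (Bi *v g)) \<bullet> w"
    unfolding inner_tr by (simp add: e_def inner_add_left)
  have ew: "e \<bullet> w = e \<bullet> (Ai *v (Ainv *v w))" by (simp add: matrix_vector_mul_assoc inv)
  have "(e \<bullet> w)^2 \<le> (e \<bullet> (Ai *v e)) * ((Ainv *v w) \<bullet> (Ai *v (Ainv *v w)))"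
    unfolding ew by (rule cs_form[OF symA psdA])
  also have "(Ainv *v w) \<bullet> (Ai *v (Ainv *v w)) = s"
  proof -
    have "(Ainv *v w) \<bullet> (Ai *v (Ainv *v w)) = w \<bullet> (P *v (P *v w))"
      by (simp add: matrix_vector_mul_assoc inv PP inner_commute)
    also have "\<dots> = s" unfolding s_def by (rule sym_inner[OF symP])
    finally show ?thesis .
  qed
  also have "(e \<bullet> (Ai *v e)) * s \<le> q * s"
    using hE s0 unfolding e_def q_def by (intro mult_right_mono) simp_all
  also have "q * s \<le> m^2"
  proof -
    have "m^2 = (\<eta> / 2 * s - q / (2 * \<eta>))^2 + q * s"
      unfolding m_def using eta by (simp add: field_simps power2_eq_square)
    thus ?thesis by simp
  qed
  finally have "e \<bullet> w \<le> m" using m0 by (rule power2_le_imp_le)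
  moreover have "L - (Ainv *v (Bi *v g)) \<bullet> w + m \<le> 0"
    using Hc c1 unfolding m_def s_def q_def by simp
  ultimately show ?thesis unfolding c2 by linarith
qed

theorem mainTheorem5:
  fixes Astar :: "real ^ 'a ^ 'n" and Bstar :: "real ^ 'b ^ 'n"
    and Z :: "real ^ 'n \<Rightarrow> real ^ 'a" and W :: "real ^ 'n \<Rightarrow> real ^ 'm ^ 'b"
    and T :: nat and xs :: "nat \<Rightarrow> real ^ 'n" and us :: "nat \<Rightarrow> real ^ 'm"
    and dxs :: "nat \<Rightarrow> real ^ 'n" and ds :: "nat \<Rightarrow> real ^ 'n"
    and \<omega> \<epsilon> :: real
    and Ai :: "real ^ ('a + 'b) ^ ('a + 'b)" and Bi :: "real ^ 'n ^ ('a + 'b)"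
    and \<tau> :: "nat \<Rightarrow> real"
    and q :: nat and \<sigma> :: "nat \<Rightarrow> real ^ 'n \<Rightarrow> real" and lam :: "real ^ 'n \<Rightarrow> real"
    and \<eta>bar :: real
    and ell \<eta> h :: "real ^ 'n \<Rightarrow> real" and K :: "real ^ 'n \<Rightarrow> real ^ 'm"
    and s :: "nat \<Rightarrow> real ^ 'n \<Rightarrow> real" and vsig :: "real ^ 'n \<Rightarrow> real" and \<theta> :: real
  defines "c \<equiv> \<lambda>j. - (\<omega> *\<^sub>R mat 1) + outer (dxs j) (dxs j)"
    and "b \<equiv> \<lambda>j. - outer (stack (Z (xs j)) (W (xs j) *v us j)) (dxs j)"
    and "a \<equiv> \<lambda>j. outer (stack (Z (xs j)) (W (xs j) *v us j)) (stack (Z (xs j)) (W (xs j) *v us j))"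
    and "H \<equiv> \<lambda>x.
        let \<zeta>bar = - (matrix_inv Ai ** Bi);
            Pbar = psd_sqrt (matrix_inv Ai);
            Qbar = (mat 1 :: real ^ 'n ^ 'n);
            ZW = stack (Z x) (W x *v K x)
        in blk3
        (scal_mat (ell x * h x + \<epsilon> + grad h x \<bullet> (transpose \<zeta>bar *v ZW)))
        (transpose (col_mat (\<eta> x *\<^sub>R (Pbar *v ZW))))
        (transpose (col_mat (psd_sqrt Qbar *v grad h x)))
        (col_mat (\<eta> x *\<^sub>R (Pbar *v ZW)))
        (- (2 * \<eta> x) *\<^sub>R mat 1)
        0
        (col_mat (psd_sqrt Qbar *v grad h x))
        0
        (- (2 * \<eta> x) *\<^sub>R mat 1)"
    and "Sset \<equiv> {x. \<forall>j\<in>{1..q}. \<sigma> j x \<le> 0}"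
    and "L\<theta> \<equiv> {x. lam x \<le> \<theta>}"
    and "Iset \<equiv> {x. h x \<le> 0}"
  assumes Z_mono: "\<And>i. monomial_fun (\<lambda>x. Z x $ i)"
    and W_mono: "\<And>i k. monomial_fun (\<lambda>x. W x $ i $ k)"
    and data: "\<And>j. j < T \<Longrightarrow> dxs j = Astar *v Z (xs j) + Bstar *v (W (xs j) *v us j) + ds j"
    and noise: "\<And>j. j < T \<Longrightarrow> (norm (ds j))\<^sup>2 \<le> \<omega>"
    and eps_pos: "\<epsilon> > 0"
    and Ai_sym: "symmetric_mat Ai"
    and LMI: "neg_semidef (blk3
        (- mat 1 - (\<Sum>j<T. \<tau> j *\<^sub>R c j)) (transpose Bi - (\<Sum>j<T. \<tau> j *\<^sub>R transpose (b j))) (transpose Bi)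
        (Bi - (\<Sum>j<T. \<tau> j *\<^sub>R b j)) (Ai - (\<Sum>j<T. \<tau> j *\<^sub>R a j)) 0
        Bi 0 (- Ai))"
    and Ai_pd: "pos_def Ai"
    and tau_nonneg: "\<And>j. j < T \<Longrightarrow> \<tau> j \<ge> 0"
    and \<sigma>_poly: "\<And>j. j \<in> {1..q} \<Longrightarrow> poly_fun (\<sigma> j)"
    and lam_poly: "poly_fun lam"
    and lam_nonneg: "\<And>x. lam x \<ge> 0"
    and \<eta>bar_pos: "\<eta>bar > 0"
    and ell_poly: "poly_fun ell" and \<eta>_poly: "poly_fun \<eta>" and h_poly: "poly_fun h"
    and K_poly: "poly_vec K"
    and s_sos: "\<And>j. j \<in> {1..q} \<Longrightarrow> sos (s j)"
    and vsig_sos: "sos vsig"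
    and \<theta>_nonneg: "\<theta> \<ge> 0"
    and sos1: "sos (\<lambda>x. \<eta> x - \<eta>bar)"
    and sos2: "sos_mat (\<lambda>x. - H x)"
    and sos3: "sos (\<lambda>x. vsig x * (lam x - \<theta>) - h x)"
    and sos4: "\<And>j. j \<in> {1..q} \<Longrightarrow> sos (\<lambda>x. s j x * h x - \<sigma> j x)"
  shows "invariant_set (\<lambda>x. Astar *v Z x + Bstar *v (W x *v K x)) Iset
         \<and> L\<theta> \<subseteq> Iset \<and> Iset \<subseteq> Sset"
proof -
  define Ainv where "Ainv = matrix_inv Ai"
  define Zt where "Zt = zmat Astar Bstar"
  define P where "P = psd_sqrt Ainv"
  define Qs where "Qs = psd_sqrt (mat 1 :: real ^ 'n ^ 'n)"
  have inv: "Ai ** Ainv = mat 1" and psdAinv: "pos_semidef Ainv"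
    using pd_inv[OF Ai_pd] unfolding Ainv_def by auto
  have symA: "transpose Ai = Ai" using Ai_sym by (simp add: symmetric_mat_def)
  have psdA: "\<And>v. v \<bullet> (Ai *v v) \<ge> 0"
  proof -
    fix v :: "real ^ ('a + 'b)"
    show "v \<bullet> (Ai *v v) \<ge> 0"
    proof (cases "v = 0")
      case True then show ?thesis by simp
    next
      case False then show ?thesis using Ai_pd unfolding pos_def_def by (simp add: less_imp_le)
    qed
  qed
  have Pp: "pos_semidef P" "P ** P = Ainv" using psd_sqrt_props[OF psdAinv] unfolding P_def by auto
  have symP: "transpose P = P" using Pp(1) by (simp add: pos_semidef_def symmetric_mat_def)
  have psdI: "pos_semidef (mat 1 :: real ^ 'n ^ 'n)"
    by (simp add: pos_semidef_def symmetric_mat_def)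
  have Qp: "pos_semidef Qs" "Qs ** Qs = mat 1" using psd_sqrt_props[OF psdI] unfolding Qs_def by auto
  have symQ: "transpose Qs = Qs" using Qp(1) by (simp add: pos_semidef_def symmetric_mat_def)
  have fZ: "\<And>x. Astar *v Z x + Bstar *v (W x *v K x) = transpose Zt *v stack (Z x) (W x *v K x)"
    unfolding Zt_def by (simp only: zmat_tr)
  have hE: "(Zt *v u + Ainv *v (Bi *v u)) \<bullet> (Ai *v (Zt *v u + Ainv *v (Bi *v u))) \<le> u \<bullet> u" for u
  proof (rule lmi_conseq[OF LMI inv symA])
    show "\<And>j. j < T \<Longrightarrow> 0 \<le> \<tau> j" by (rule tau_nonneg)
  next
    fix j assume j: "j < T"
    have dx: "dxs j = transpose Zt *v stack (Z (xs j)) (W (xs j) *v us j) + ds j"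
      using data[OF j] unfolding Zt_def by (simp only: zmat_tr)
    show "u \<bullet> (c j *v u) + u \<bullet> (transpose (b j) *v (Zt *v u))
       + (Zt *v u) \<bullet> (b j *v u) + (Zt *v u) \<bullet> (a j *v (Zt *v u)) \<le> 0"
      unfolding c_def b_def a_def by (rule data_term[OF dx noise[OF j]])
  qed
  have Hneg: "\<And>x v. v \<bullet> (H x *v v) \<le> 0" by (rule sos_mat_neg[OF sos2])
  have eta_pos: "\<And>x. \<eta> x > 0"
  proof -
    fix x show "\<eta> x > 0" using sos_nonneg[OF sos1, of x] \<eta>bar_pos by simp
  qed
  have bound: "grad h x \<bullet> (Astar *v Z x + Bstar *v (W x *v K x)) \<le> - (ell x * h x + \<epsilon>)" for x
  proof -
    define g where "g = grad h x"
    define w where "w = stack (Z x) (W x *v K x)"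
    have "stack one1 (stack ((1/2) *\<^sub>R (P *v w)) ((1/(2 * \<eta> x)) *\<^sub>R (Qs *v g))) \<bullet> (blk3
        (scal_mat (ell x * h x + \<epsilon> + g \<bullet> (transpose (- (Ainv ** Bi)) *v w)))
        (transpose (col_mat (\<eta> x *\<^sub>R (P *v w)))) (transpose (col_mat (Qs *v g)))
        (col_mat (\<eta> x *\<^sub>R (P *v w))) (- (2 * \<eta> x) *\<^sub>R mat 1) 0
        (col_mat (Qs *v g)) 0 (- (2 * \<eta> x) *\<^sub>R mat 1)
        *v stack one1 (stack ((1/2) *\<^sub>R (P *v w)) ((1/(2 * \<eta> x)) *\<^sub>R (Qs *v g)))) \<le> 0"
      using Hneg[of "stack one1 (stack ((1/2) *\<^sub>R (P *v w)) ((1/(2 * \<eta> x)) *\<^sub>R (Qs *v g)))" x]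
      unfolding H_def Let_def g_def w_def Ainv_def P_def Qs_def .
    from H_conseq[OF this refl refl symQ Qp(2) eta_pos[of x]]
    have Hc: "ell x * h x + \<epsilon> + g \<bullet> (transpose (- (Ainv ** Bi)) *v w)
        + \<eta> x / 2 * ((P *v w) \<bullet> (P *v w)) + (g \<bullet> g) / (2 * \<eta> x) \<le> 0" .
    have "g \<bullet> (transpose Zt *v w) \<le> - (ell x * h x + \<epsilon>)"
      by (rule deriv_bound[OF symA psdA inv symP Pp(2) hE Hc eta_pos[of x]])
    then show ?thesis unfolding fZ g_def w_def .
  qed
  have part1: "invariant_set (\<lambda>x. Astar *v Z x + Bstar *v (W x *v K x)) Iset"
    unfolding invariant_set_def
  proof (intro allI impI ballI)
    fix xt :: "real \<Rightarrow> real ^ 'n" and J t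
    assume asm: "maximal_solution (\<lambda>x. Astar *v Z x + Bstar *v (W x *v K x)) xt J \<and> xt 0 \<in> Iset"
      and t: "t \<in> J"
    have J: "forward_interval J" and sol: "is_solution (\<lambda>x. Astar *v Z x + Bstar *v (W x *v K x)) xt J"
      using asm unfolding maximal_solution_def by auto
    have "h (xt t) \<le> 0"
    proof (rule ode_sign[OF J, of "\<lambda>s. h (xt s)" "\<lambda>s. grad h (xt s) \<bullet> (Astar *v Z (xt s) + Bstar *v (W (xt s) *v K (xt s)))"])
      fix s assume sJ: "s \<in> J"
      obtain D where D: "(h has_derivative D) (at (xt s))" using poly_has_deriv[OF h_poly] by blast
      have "(xt has_vector_derivative (Astar *v Z (xt s) + Bstar *v (W (xt s) *v K (xt s)))) (at s within J)"
        using sol sJ unfolding is_solution_def by blast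
      from chain_h[OF D this]
      show "((\<lambda>s. h (xt s)) has_real_derivative grad h (xt s) \<bullet> (Astar *v Z (xt s) + Bstar *v (W (xt s) *v K (xt s)))) (at s within J)" .
    next
      fix s assume "s \<in> J" "h (xt s) = 0"
      then show "grad h (xt s) \<bullet> (Astar *v Z (xt s) + Bstar *v (W (xt s) *v K (xt s))) < 0"
        using bound[of "xt s"] eps_pos by simp
    next
      show "h (xt 0) \<le> 0" using asm unfolding Iset_def by simp
    next
      show "t \<in> J" by (rule t)
    qed
    then show "xt t \<in> Iset" unfolding Iset_def by simp
  qed
  have part2: "L\<theta> \<subseteq> Iset"
  proof
    fix x assume "x \<in> L\<theta>"
    hence "lam x \<le> \<theta>" unfolding L\<theta>_def by simp
    moreover have "vsig x \<ge> 0" by (rule sos_nonneg[OF vsig_sos])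
    ultimately have "vsig x * (lam x - \<theta>) \<le> 0" by (simp add: mult_nonneg_nonpos)
    moreover have "vsig x * (lam x - \<theta>) - h x \<ge> 0" using sos_nonneg[OF sos3, of x] by simp
    ultimately show "x \<in> Iset" unfolding Iset_def by simp
  qed
  have part3: "Iset \<subseteq> Sset"
  proof
    fix x assume "x \<in> Iset"
    hence hx: "h x \<le> 0" unfolding Iset_def by simp
    show "x \<in> Sset" unfolding Sset_def
    proof (intro CollectI ballI)
      fix j assume j: "j \<in> {1..q}"
      have "s j x \<ge> 0" by (rule sos_nonneg[OF s_sos[OF j]])
      hence "s j x * h x \<le> 0" using hx by (simp add: mult_nonneg_nonpos)
      moreover have "s j x * h x - \<sigma> j x \<ge> 0" using sos_nonneg[OF sos4[OF j], of x] by simp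
      ultimately show "\<sigma> j x \<le> 0" by simp
    qed
  qed
  show ?thesis using part1 part2 part3 by blast
qed

end
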